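(* Let $A\in C^\infty(\mathbb R_+\times\mathbb R^n,\mathbb C^{m\times m})\cap L^\infty(\mathbb R_+,S^1(\mathbb R^n))$, fix $N>0$, $\nu\in[0,1]$, and assume (A4). Then the fundamental solution $\mathcal E(t,s,\xi)$, defined by $\mathrm D_t\mathcal E(t,s,\xi)=A(t,\xi)\mathcal E(t,s,\xi)$, $\mathcal E(s,s,\xi)=I$, satisfies $$\|\mathcal E(t,0,\xi)\|\le C\exp\big(C'(\log(e+t_\xi))^\nu\big)$$ for some constants $C,C'$, uniformly in $(t,\xi)\in Z_{pd}(N,\nu)$.
   Context: $\mathrm D_t=-i\partial_t$; $\operatorname{Im}B=\frac1{2i}(B-B^* )$, matrix inequalities in the Hermitian sense. $t_\xi\ge0$ is defined implicitly by $(1+t_\xi)|\xi|=N(\log(e+t_\xi))^\nu$ ($t_\xi=0$ if $|\xi|\ge N$), and $Z_{pd}(N,\nu)=\{(t,\xi):0\le t\le t_\xi\}$. (A4): there exist a constant $c$ and a function $g(t)$ with $\int_0^tg(s)\,\mathrm ds\le C(\log(e+t))^\nu$ for all $t\ge0$ such that $\operatorname{Im}A(t,\xi)+c|\xi|I+\frac12g(t)I\ge0$ for all $(t,\xi)\in Z_{pd}(N,\nu)$ (for $N$ sufficiently large). *)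

theory Defs
  imports "HOL-Analysis.Analysis"
begin

definition adjoint_mat :: "complex^'m^'m \<Rightarrow> complex^'m^'m" where
  "adjoint_mat B = (\<chi> i j. cnj (B $ j $ i))"

definition Im_mat :: "complex^'m^'m \<Rightarrow> complex^'m^'m" where
  "Im_mat B = (\<chi> i j. (B $ i $ j - adjoint_mat B $ i $ j) / (2 * \<i>))"

definition herm_psd :: "complex^'m^'m \<Rightarrow> bool" where
  "herm_psd B \<longleftrightarrow> adjoint_mat B = B \<and>
     (\<forall>v :: complex^'m. 0 \<le> Re (\<Sum>i\<in>UNIV. cnj (v $ i) * (B *v v) $ i))"

fun has_partials :: "'a::euclidean_space set \<Rightarrow> ('a \<Rightarrow> 'b::real_normed_vector) \<Rightarrow> 'a list \<Rightarrow> bool" where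
  "has_partials S F [] = continuous_on S F"
| "has_partials S F (v # vs) =
     (\<exists>G. (\<forall>x\<in>S. ((\<lambda>h. F (x + h *\<^sub>R v)) has_vector_derivative G x)
                       (at 0 within {h. x + h *\<^sub>R v \<in> S}))
          \<and> has_partials S G vs)"

definition smooth_on :: "'a::euclidean_space set \<Rightarrow> ('a \<Rightarrow> 'b::real_normed_vector) \<Rightarrow> bool" where
  "smooth_on S F \<longleftrightarrow> (\<forall>vs. set vs \<subseteq> Basis \<longrightarrow> has_partials S F vs)"

definition xi_partial :: "'n::finite \<Rightarrow> (real^'n \<Rightarrow> 'b::real_normed_vector) \<Rightarrow> real^'n \<Rightarrow> 'b" where
  "xi_partial j f \<xi> = vector_derivative (\<lambda>h. f (\<xi> + h *\<^sub>R axis j 1)) (at 0)"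

text \<open>\<partial>_\<xi>^\<alpha> with the multi-index \<alpha> given as a list of coordinate indices.\<close>
fun xi_partials :: "'n::finite list \<Rightarrow> (real^'n \<Rightarrow> 'b::real_normed_vector) \<Rightarrow> real^'n \<Rightarrow> 'b" where
  "xi_partials [] f = f"
| "xi_partials (j # js) f = xi_partial j (xi_partials js f)"

definition Linf_S1 :: "(real \<Rightarrow> real^'n::finite \<Rightarrow> 'b::real_normed_vector) \<Rightarrow> bool" where
  "Linf_S1 A \<longleftrightarrow> (\<forall>js :: 'n list. \<exists>C. \<forall>t\<ge>0. \<forall>\<xi>.
      norm (xi_partials js (A t) \<xi>) \<le> C * (1 + norm \<xi> ^ 2) powr ((1 - real (length js)) / 2))"

definition t_xi :: "real \<Rightarrow> real \<Rightarrow> real \<Rightarrow> real" where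
  "t_xi N \<nu> r = (if r \<ge> N then 0
      else (THE t. t \<ge> 0 \<and> (1 + t) * r = N * (ln (exp 1 + t)) powr \<nu>))"

definition Z_pd :: "real \<Rightarrow> real \<Rightarrow> (real \<times> (real^'n::finite)) set" where
  "Z_pd N \<nu> = {(t, \<xi>). 0 \<le> t \<and> t \<le> t_xi N \<nu> (norm \<xi>)}"

definition A4 :: "(real \<Rightarrow> real^'n::finite \<Rightarrow> complex^'m^'m) \<Rightarrow> real \<Rightarrow> real \<Rightarrow> bool" where
  "A4 A N \<nu> \<longleftrightarrow> (\<exists>c C (g :: real \<Rightarrow> real).
     (\<forall>t\<ge>0. set_integrable lborel {0..t} g \<and>
             (LBINT s:{0..t}. g s) \<le> C * (ln (exp 1 + t)) powr \<nu>) \<and>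
     (\<forall>(t, \<xi>) \<in> Z_pd N \<nu>.
        herm_psd (Im_mat (A t \<xi>) + mat (complex_of_real (c * norm \<xi> + g t / 2)))))"

end

theory Submission
  imports Defs
begin

lemma mat_i_mult: "(mat c ** (Y::complex^'m^'m)) $ a $ b = c * Y $ a $ b"
proof -
  have "\<And>k. (if a = k then c else 0) * Y $ k $ b = (if a = k then c * Y $ k $ b else 0)"
    by simp
  then show ?thesis
    unfolding matrix_matrix_mult_def mat_def by simp
qed
lemma inner_XX:
  fixes X :: "complex^'m^'m"
  shows "inner X X = (\<Sum>j\<in>UNIV. \<Sum>i\<in>UNIV. (cmod (X$i$j))^2)"
proof -
  have "inner X X = (\<Sum>i\<in>UNIV. \<Sum>j\<in>UNIV. (cmod (X$i$j))^2)"
    by (simp add: inner_vec_def power2_norm_eq_inner)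
  also have "\<dots> = (\<Sum>j\<in>UNIV. \<Sum>i\<in>UNIV. (cmod (X$i$j))^2)" by (rule sum.swap)
  finally show ?thesis .
qed
lemma inner_iY:
  fixes X Y :: "complex^'m^'m"
  shows "inner X (mat \<i> ** Y) = (\<Sum>j\<in>UNIV. - Im (\<Sum>i\<in>UNIV. cnj (X$i$j) * Y$i$j))"
proof -
  have "inner X (mat \<i> ** Y) = (\<Sum>i\<in>UNIV. \<Sum>j\<in>UNIV. inner (X$i$j) (\<i> * Y$i$j))"
    by (simp add: inner_vec_def mat_i_mult)
  also have "\<dots> = (\<Sum>i\<in>UNIV. \<Sum>j\<in>UNIV. - Im (cnj (X$i$j) * Y$i$j))"
    by (simp add: inner_complex_def algebra_simps)
  also have "\<dots> = (\<Sum>j\<in>UNIV. \<Sum>i\<in>UNIV. - Im (cnj (X$i$j) * Y$i$j))"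
    by (rule sum.swap)
  also have "\<dots> = (\<Sum>j\<in>UNIV. - Im (\<Sum>i\<in>UNIV. cnj (X$i$j) * Y$i$j))"
    by (simp only: Im_sum sum_negf)
  finally show ?thesis .
qed


lemma Re_cnj_mult_self: "Re (cnj z * z) = (cmod z)^2"
  using cmod_power2[of z] by (simp add: power2_eq_square)

lemma Re_ofreal_mult: "Re (complex_of_real l * z) = l * Re z" by simp

lemma psd_col:
  fixes B X :: "complex^'m^'m" and l :: real
  assumes "herm_psd (Im_mat B + mat (complex_of_real l))"
  shows "0 \<le> Im (\<Sum>i\<in>UNIV. cnj (X$i$j) * (B ** X)$i$j) + l * (\<Sum>i\<in>UNIV. (cmod (X$i$j))^2)"
proof -
  define v where "v = (\<chi> i. X$i$j)"
  define M where "M = Im_mat B + mat (complex_of_real l)"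
  define Q where "Q = (\<Sum>i\<in>UNIV. cnj (X$i$j) * (B ** X)$i$j)"
  have 0: "0 \<le> Re (\<Sum>i\<in>UNIV. cnj (v $ i) * (M *v v) $ i)"
    using assms unfolding herm_psd_def M_def by blast
  have Q1: "Q = (\<Sum>i\<in>UNIV. \<Sum>k\<in>UNIV. cnj (v$i) * B$i$k * v$k)"
    by (simp add: Q_def v_def matrix_matrix_mult_def sum_distrib_left mult.assoc)
  have "cnj Q = (\<Sum>i\<in>UNIV. \<Sum>k\<in>UNIV. cnj (v$k) * cnj (B$i$k) * v$i)"
    unfolding Q1 by (simp add: mult.commute mult.left_commute)
  also have "\<dots> = (\<Sum>k\<in>UNIV. \<Sum>i\<in>UNIV. cnj (v$k) * cnj (B$i$k) * v$i)"
    by (rule sum.swap)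
  finally have Q2: "cnj Q = (\<Sum>i\<in>UNIV. \<Sum>k\<in>UNIV. cnj (v$i) * cnj (B$k$i) * v$k)" .
  have Mik: "M$i$k = (B$i$k - cnj(B$k$i))/(2*\<i>) + (if i = k then of_real l else 0)" for i k
    by (simp add: M_def Im_mat_def adjoint_mat_def mat_def)
  have row: "cnj (v$i) * (M *v v)$i = (\<Sum>k\<in>UNIV. cnj (v$i) * B$i$k * v$k)/(2*\<i>)
      - (\<Sum>k\<in>UNIV. cnj (v$i) * cnj (B$k$i) * v$k)/(2*\<i>) + of_real l * (cnj (v$i) * v$i)" for i
  proof -
    have "(M *v v)$i = (\<Sum>k\<in>UNIV. (B$i$k * v$k)/(2*\<i>) - (cnj(B$k$i) * v$k)/(2*\<i>)
         + (if k = i then of_real l * v$k else 0))"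
      unfolding matrix_vector_mult_def Mik by (auto intro!: sum.cong simp: field_simps)
    also have "\<dots> = (\<Sum>k\<in>UNIV. B$i$k * v$k)/(2*\<i>) - (\<Sum>k\<in>UNIV. cnj(B$k$i) * v$k)/(2*\<i>)
         + of_real l * v$i"
      by (simp only: sum.distrib sum_subtractf sum_divide_distrib[symmetric]) simp
    finally have eq: "(M *v v)$i = (\<Sum>k\<in>UNIV. B$i$k * v$k)/(2*\<i>) - (\<Sum>k\<in>UNIV. cnj(B$k$i) * v$k)/(2*\<i>)
         + of_real l * v$i" .
    show ?thesis unfolding eq
      by (simp only: ring_distribs times_divide_eq_right sum_distrib_left mult.assoc mult.left_commute[of "cnj (v$i)" "of_real l"])
  qed
  have S: "(\<Sum>i\<in>UNIV. cnj (v $ i) * (M *v v) $ i) =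
      Q / (2*\<i>) - cnj Q / (2*\<i>) + of_real l * (\<Sum>i\<in>UNIV. cnj (v$i) * v$i)"
  proof -
    have "(\<Sum>i\<in>UNIV. cnj (v $ i) * (M *v v) $ i) =
      (\<Sum>i\<in>UNIV. \<Sum>k\<in>UNIV. cnj (v$i) * B$i$k * v$k)/(2*\<i>)
      - (\<Sum>i\<in>UNIV. \<Sum>k\<in>UNIV. cnj (v$i) * cnj (B$k$i) * v$k)/(2*\<i>)
      + of_real l * (\<Sum>i\<in>UNIV. cnj (v$i) * v$i)"
      unfolding row by (simp only: sum.distrib sum_subtractf sum_divide_distrib sum_distrib_left)
    then show ?thesis by (simp only: Q2[symmetric] Q1[symmetric])
  qed
  have R: "Re (Q / (2*\<i>) - cnj Q / (2*\<i>)) = Im Q"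
    by (simp add: complex_eq_iff Re_divide)
  have N: "Re (of_real l * (\<Sum>i\<in>UNIV. cnj (v$i) * v$i)) = l * (\<Sum>i\<in>UNIV. (cmod (X$i$j))^2)"
    by (simp only: Re_ofreal_mult Re_sum Re_cnj_mult_self v_def vec_lambda_beta)
  have "Re (\<Sum>i\<in>UNIV. cnj (v $ i) * (M *v v) $ i) = Im Q + l * (\<Sum>i\<in>UNIV. (cmod (X$i$j))^2)"
    unfolding S using R N by simp
  with 0 show ?thesis by (simp add: Q_def)
qed



lemma mm_add_l: "((A + B) ** (X::complex^'m^'m)) = A ** X + B ** X"
  by (simp add: vec_eq_iff matrix_matrix_mult_def sum.distrib ring_distribs)
lemma mm_scale_l: "((r *\<^sub>R A) ** (X::complex^'m^'m)) = r *\<^sub>R (A ** X)"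
  by (simp add: vec_eq_iff matrix_matrix_mult_def scaleR_sum_right)
lemma mm_scale_r: "(A ** (r *\<^sub>R X::complex^'m^'m)) = r *\<^sub>R (A ** X)"
  by (simp add: vec_eq_iff matrix_matrix_mult_def scaleR_sum_right)

lemma bil: "bilinear (\<lambda>(A::complex^'m^'m) (X::complex^'m^'m). mat \<i> ** (A ** X))"
  unfolding bilinear_def linear_iff
  by (simp add: mm_add_l matrix_add_ldistrib mm_scale_l mm_scale_r)

lemma bound_iAX: "\<exists>K>0. \<forall>(A::complex^'m^'m) (X::complex^'m^'m). norm (mat \<i> ** (A ** X)) \<le> K * norm A * norm X"
  using bilinear_bounded_pos[OF bil] by blast



lemma t_xi_prop:
  fixes N \<nu> r :: real
  assumes N: "N > 0" and nu: "0 \<le> \<nu>" "\<nu> \<le> 1" and r: "0 < r" "r < N"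
  shows "t_xi N \<nu> r \<ge> 0 \<and> (1 + t_xi N \<nu> r) * r = N * ln (exp 1 + t_xi N \<nu> r) powr \<nu>"
proof -
  define P where "P t \<longleftrightarrow> t \<ge> 0 \<and> (1+t)*r = N * ln (exp 1 + t) powr \<nu>" for t :: real
  define f where "f t = (1+t)*r - N * ln (exp 1 + t) powr \<nu>" for t :: real
  define fd where "fd x = r - N * (\<nu> * ln (exp 1 + x) powr (\<nu> - 1) / (exp 1 + x))" for x :: real
  have lnpos: "ln (exp 1 + t) \<ge> 1" if "t \<ge> 0" for t :: real
  proof -
    have "ln (exp 1) \<le> ln (exp 1 + t)" using that by (intro ln_le_cancel_iff[THEN iffD2]) (auto intro: add_pos_nonneg)
    thus ?thesis by simp
  qed
  have f0: "f 0 < 0" using r by (simp add: f_def)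
  have PF: "P t \<longleftrightarrow> t \<ge> 0 \<and> f t = 0" for t by (auto simp: P_def f_def)
  have cont: "continuous_on {0..T} f" for T
  proof -
    have "\<forall>t\<in>{0..T}. ln (exp 1 + t) > 0" using lnpos by (auto intro: less_le_trans[OF zero_less_one])
    thus ?thesis unfolding f_def by (intro continuous_intros) auto
  qed
  define M where "M = 2 + 2*N/r"
  have M2: "M \<ge> 2" using N r by (simp add: M_def)
  have rM: "2*N \<le> r*M" using r by (simp add: M_def field_simps)
  have fT: "f (M^2) \<ge> 0"
  proof -
    have l1: "ln (exp 1 + M^2) powr \<nu> \<le> ln (exp 1 + M^2)"
      using powr_mono[OF nu(2) lnpos[of "M^2"]] lnpos[of "M^2"] by (simp add: powr_one)
    have "exp 1 + M^2 \<le> (M+1)^2" using M2 exp_le by (simp add: power2_eq_square algebra_simps)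
    hence "ln (exp 1 + M^2) \<le> ln ((M+1)^2)"
      using M2 by (intro ln_le_cancel_iff[THEN iffD2]) (auto intro: add_pos_nonneg)
    also have "\<dots> = 2 * ln (M+1)" using M2 by (simp add: ln_realpow)
    also have "\<dots> \<le> 2 * M" using ln_le_minus_one[of "M+1"] M2 by simp
    finally have "N * ln (exp 1 + M^2) powr \<nu> \<le> N * (2*M)" using l1 N by (simp add: mult_left_mono)
    also have "\<dots> \<le> r * M * M" using rM M2 by (simp add: mult_right_mono mult.assoc[symmetric])
    also have "\<dots> \<le> (1 + M^2) * r" using r by (simp add: power2_eq_square algebra_simps)
    finally show ?thesis by (simp add: f_def)
  qed
  have ex: "\<exists>t. P t"
  proof -
    obtain x where "0 \<le> x" "x \<le> M^2" "f x = 0"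
      using IVT'[of f 0 0 "M^2", OF _ fT _ cont] f0 by auto
    thus ?thesis using PF by blast
  qed
  have der: "DERIV f x :> fd x" if "x \<ge> 0" for x
  proof -
    have "ln (exp 1 + x) > 0" using lnpos[OF that] by linarith
    moreover have "exp 1 + x > 0" using that by (simp add: add_pos_nonneg)
    ultimately show ?thesis unfolding f_def fd_def
      by (auto intro!: derivative_eq_intros simp: field_simps)
  qed
  have mono: "fd x \<le> fd y" if "0 \<le> x" "x \<le> y" for x y
  proof -
    have a: "ln (exp 1 + y) powr (\<nu> - 1) \<le> ln (exp 1 + x) powr (\<nu> - 1)"
      using nu lnpos[OF that(1)] that by (intro powr_mono2') (auto intro!: ln_mono add_pos_nonneg)
    have b: "1 / (exp 1 + y) \<le> 1 / (exp 1 + x)"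
      using that by (intro divide_left_mono) (auto simp: add_pos_nonneg intro: mult_pos_pos)
    have "ln (exp 1 + y) powr (\<nu> - 1) * (1 / (exp 1 + y)) \<le> ln (exp 1 + x) powr (\<nu> - 1) * (1 / (exp 1 + x))"
      using a b that by (intro mult_mono) (auto simp: add_pos_nonneg)
    hence "\<nu> * (ln (exp 1 + y) powr (\<nu> - 1) * (1 / (exp 1 + y))) \<le> \<nu> * (ln (exp 1 + x) powr (\<nu> - 1) * (1 / (exp 1 + x)))"
      by (rule mult_left_mono) (use nu in auto)
    hence "N * (\<nu> * (ln (exp 1 + y) powr (\<nu> - 1) * (1 / (exp 1 + y)))) \<le> N * (\<nu> * (ln (exp 1 + x) powr (\<nu> - 1) * (1 / (exp 1 + x))))"
      by (rule mult_left_mono) (use N in auto)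
    thus ?thesis by (simp add: fd_def)
  qed
  have uniq_lt: False if H: "P t1" "P t2" "t1 < t2" for t1 t2
  proof -
    have t1: "0 < t1" using H f0 PF by (metis order_le_less)
    obtain z1 where z1: "0 < z1" "z1 < t1" "f t1 - f 0 = (t1 - 0) * fd z1"
      using MVT2[OF t1, of f fd] der by auto
    obtain z2 where z2: "t1 < z2" "z2 < t2" "f t2 - f t1 = (t2 - t1) * fd z2"
      using MVT2[OF H(3), of f fd] der t1 by auto
    have "t1 * fd z1 > 0" using z1 f0 H PF t1 by simp
    hence "fd z1 > 0" using t1 by (simp add: zero_less_mult_iff)
    moreover have "fd z2 = 0" using z2 H PF by simp
    moreover have "fd z1 \<le> fd z2" using mono z1 z2 by simp
    ultimately show False by simp
  qed
  have ex1: "\<exists>!t. P t" using ex uniq_lt by (metis linorder_neqE_linordered_idom)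
  have "t_xi N \<nu> r = (THE t. P t)" using r by (simp add: t_xi_def P_def)
  with theI'[OF ex1] show ?thesis by (simp add: P_def)
qed



lemma key_ineq:
  fixes B X :: "complex^'m^'m" and l :: real
  assumes "herm_psd (Im_mat B + mat (complex_of_real l))"
  shows "inner X (mat \<i> ** (B ** X)) \<le> l * inner X X"
proof -
  have "inner X (mat \<i> ** (B ** X)) = (\<Sum>j\<in>UNIV. - Im (\<Sum>i\<in>UNIV. cnj (X$i$j) * (B ** X)$i$j))"
    by (rule inner_iY)
  also have "\<dots> \<le> (\<Sum>j\<in>UNIV. l * (\<Sum>i\<in>UNIV. (cmod (X$i$j))^2))"
  proof (rule sum_mono)
    fix j show "- Im (\<Sum>i\<in>UNIV. cnj (X$i$j) * (B ** X)$i$j) \<le> l * (\<Sum>i\<in>UNIV. (cmod (X$i$j))^2)"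
      using psd_col[OF assms, of X j] by linarith
  qed
  also have "\<dots> = l * inner X X" by (simp add: inner_XX sum_distrib_left)
  finally show ?thesis .
qed

theorem lemma9:
  fixes A :: "real \<Rightarrow> real^'n \<Rightarrow> complex^'m^'m"
    and N \<nu> :: real
  assumes smooth: "smooth_on {p :: real \<times> (real^'n). fst p \<ge> 0} (\<lambda>p. A (fst p) (snd p))"
    and symb: "Linf_S1 A"
    and N_pos: "N > 0"
    and nu: "0 \<le> \<nu>" "\<nu> \<le> 1"
    and A4: "A4 A N \<nu>"
  shows "\<exists>C C'. \<forall>(E :: real \<Rightarrow> complex^'m^'m) t \<xi>.
     E 0 = mat 1 \<and>
     (\<forall>s\<ge>0. (E has_vector_derivative (mat \<i> ** (A s \<xi> ** E s))) (at s within {0..})) \<and>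
     (t, \<xi>) \<in> Z_pd N \<nu>
     \<longrightarrow> norm (E t) \<le> C * exp (C' * (ln (exp 1 + t_xi N \<nu> (norm \<xi>))) powr \<nu>)"
proof -
  obtain c Cg and g :: "real \<Rightarrow> real" where
    gI: "\<forall>t\<ge>0. set_integrable lborel {0..t} g \<and> (LBINT s:{0..t}. g s) \<le> Cg * (ln (exp 1 + t)) powr \<nu>"
    and psd: "\<forall>(t, \<xi>) \<in> Z_pd N \<nu>.
        herm_psd (Im_mat (A t \<xi>) + mat (complex_of_real (c * norm \<xi> + g t / 2)))"
    using A4 unfolding A4_def by blast
  obtain K0 where K0: "\<forall>t\<ge>0. \<forall>\<xi>. norm (A t \<xi>) \<le> K0 * (1 + norm \<xi> ^ 2) powr (1/2)"
    using symb unfolding Linf_S1_def by (drule_tac x="[]" in spec) auto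
  obtain Kb where Kb: "Kb > 0" "\<forall>(B::complex^'m^'m) (X::complex^'m^'m). norm (mat \<i> ** (B ** X)) \<le> Kb * norm B * norm X"
    using bound_iAX by blast
  have m1: "(mat 1 :: complex^'m^'m) \<noteq> 0"
  proof
    assume "(mat 1 :: complex^'m^'m) = 0"
    hence "(mat 1 :: complex^'m^'m) $ undefined $ undefined = 0" by simp
    thus False by (simp add: mat_def)
  qed
  show ?thesis
  proof (intro exI allI impI, elim conjE)
    fix E :: "real \<Rightarrow> complex^'m^'m" and t and \<xi> :: "real^'n"
    assume E0: "E 0 = mat 1"
      and dE: "\<forall>s\<ge>0. (E has_vector_derivative (mat \<i> ** (A s \<xi> ** E s))) (at s within {0..})"
      and Z: "(t, \<xi>) \<in> Z_pd N \<nu>"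
    define T where "T = t_xi N \<nu> (norm \<xi>)"
    define L where "L = ln (exp 1 + T) powr \<nu>"
    have t0: "0 \<le> t" and tT: "t \<le> T" using Z by (auto simp: Z_pd_def T_def)
    have lnpos: "ln (exp 1 + x) \<ge> 1" if "x \<ge> 0" for x :: real
    proof -
      have "ln (exp 1) \<le> ln (exp 1 + x)" using that by (intro ln_mono) (auto intro: add_pos_nonneg)
      thus ?thesis by simp
    qed
    have L0: "L \<ge> 0" by (simp add: L_def)
    define K where "K = Kb * (K0 * (1 + norm \<xi> ^ 2) powr (1/2))"
    have K0pos: "K0 * (1 + norm \<xi> ^ 2) powr (1/2) \<ge> 0"
      using K0 by (intro order_trans[OF norm_ge_zero[of "A 0 \<xi>"]]) simp
    hence Kpos: "K \<ge> 0" using Kb by (simp add: K_def)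
    define \<phi> where "\<phi> s = inner (E s) (E s)" for s
    define D where "D s = 2 * inner (E s) (mat \<i> ** (A s \<xi> ** E s))" for s
    have dphi: "(\<phi> has_real_derivative D s) (at s within {0..})" if s: "s \<ge> 0" for s
    proof -
      have d: "(E has_derivative (\<lambda>h. h *\<^sub>R (mat \<i> ** (A s \<xi> ** E s)))) (at s within {0..})"
        using dE s by (simp add: has_vector_derivative_def)
      have "(\<phi> has_derivative (\<lambda>h. inner (E s) (h *\<^sub>R (mat \<i> ** (A s \<xi> ** E s)))
              + inner (h *\<^sub>R (mat \<i> ** (A s \<xi> ** E s))) (E s))) (at s within {0..})"
        unfolding \<phi>_def by (rule has_derivative_inner[OF d d])
      moreover have "(\<lambda>h. inner (E s) (h *\<^sub>R (mat \<i> ** (A s \<xi> ** E s)))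
              + inner (h *\<^sub>R (mat \<i> ** (A s \<xi> ** E s))) (E s)) = (*) (D s)"
        by (auto simp: D_def inner_commute fun_eq_iff)
      ultimately show ?thesis by (simp add: has_field_derivative_def)
    qed
    have lower: "D s \<ge> - 2 * K * \<phi> s" if s: "s \<ge> 0" for s
    proof -
      let ?X = "E s" and ?Y = "mat \<i> ** (A s \<xi> ** E s)"
      have a: "\<bar>inner ?X ?Y\<bar> \<le> norm ?X * norm ?Y" by (rule Cauchy_Schwarz_ineq2)
      have "norm ?Y \<le> Kb * norm (A s \<xi>) * norm ?X" using Kb by blast
      also have "\<dots> \<le> K * norm ?X" unfolding K_def
        using K0 s Kb by (intro mult_right_mono mult_left_mono) auto
      finally have "norm ?X * norm ?Y \<le> norm ?X * (K * norm ?X)" by (simp add: mult_left_mono)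
      also have "\<dots> = K * \<phi> s" by (simp add: \<phi>_def power2_norm_eq_inner[symmetric] power2_eq_square)
      finally show ?thesis using a by (simp add: D_def)
    qed
    have phi0: "\<phi> 0 > 0" using E0 m1 by (simp add: \<phi>_def)
    have pos: "\<phi> s > 0" if s: "s \<ge> 0" for s
    proof -
      define \<psi> where "\<psi> u = \<phi> u * exp (2 * K * u)" for u
      have "\<psi> 0 \<le> \<psi> s"
      proof (rule DERIV_nonneg_imp_increasing_open[OF s])
        fix u :: real assume u: "0 < u" "u < s"
        have "(\<phi> has_real_derivative D u) (at u within {0<..})"
          using u by (intro has_field_derivative_subset[OF dphi[of u]]) auto
        moreover have au: "at u within {0<..} = at u" using u by (intro at_within_open) auto
        ultimately have du: "(\<phi> has_real_derivative D u) (at u)" by (simp only: au)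
        have "(\<psi> has_real_derivative (D u * exp (2*K*u) + \<phi> u * (exp (2*K*u) * (2*K)))) (at u)"
          unfolding \<psi>_def by (auto intro!: derivative_eq_intros du)
        moreover have "D u * exp (2*K*u) + \<phi> u * (exp (2*K*u) * (2*K)) \<ge> 0"
        proof -
          have "D u + 2 * K * \<phi> u \<ge> 0" using lower[of u] u by simp
          hence "(D u + 2 * K * \<phi> u) * exp (2*K*u) \<ge> 0" by simp
          thus ?thesis using norm_ge_zero[of \<xi>] by (simp add: algebra_simps)
        qed
        ultimately show "\<exists>y. DERIV \<psi> u :> y \<and> 0 \<le> y" by blast
      next
        have "continuous_on {0..s} \<phi>"
          by (rule DERIV_continuous_on[of _ _ D], rule has_field_derivative_subset[OF dphi]) auto
        thus "continuous_on {0..s} \<psi>" unfolding \<psi>_def by (intro continuous_intros)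
      qed
      hence "\<phi> 0 \<le> \<phi> s * exp (2 * K * s)" by (simp add: \<psi>_def)
      with phi0 have "\<phi> s * exp (2 * K * s) > 0" by linarith
      thus ?thesis by (simp add: zero_less_mult_iff)
    qed
    have upper: "D s \<le> (2 * c * norm \<xi> + g s) * \<phi> s" if s: "0 \<le> s" "s \<le> t" for s
    proof -
      have "(s, \<xi>) \<in> Z_pd N \<nu>" using s tT by (auto simp: Z_pd_def T_def)
      hence "herm_psd (Im_mat (A s \<xi>) + mat (complex_of_real (c * norm \<xi> + g s / 2)))"
        using psd by blast
      from key_ineq[OF this, of "E s"] show ?thesis by (simp add: D_def \<phi>_def algebra_simps)
    qed
    have ftc: "((\<lambda>s. D s / \<phi> s) has_integral (ln (\<phi> t) - ln (\<phi> 0))) {0..t}"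
    proof (rule fundamental_theorem_of_calculus[OF t0])
      fix s assume s: "s \<in> {0..t}"
      have "((\<lambda>u. ln (\<phi> u)) has_real_derivative (1 / \<phi> s * D s)) (at s within {0..})"
        using pos[of s] s by (auto intro!: derivative_eq_intros dphi)
      hence "((\<lambda>u. ln (\<phi> u)) has_real_derivative (D s / \<phi> s)) (at s within {0..})"
        by simp
      hence "((\<lambda>u. ln (\<phi> u)) has_real_derivative (D s / \<phi> s)) (at s within {0..t})"
        by (rule has_field_derivative_subset) auto
      thus "((\<lambda>u. ln (\<phi> u)) has_vector_derivative (D s / \<phi> s)) (at s within {0..t})"
        by (simp add: has_real_derivative_iff_has_vector_derivative)
    qed
    define I where "I = (LBINT s:{0..t}. g s)"
    have gi: "(g has_integral I) {0..t}"
      using set_borel_integral_eq_integral[where f=g and S="{0..t}"] gI t0 unfolding I_def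
      by (metis integrable_integral)
    have ci: "((\<lambda>s. 2 * c * norm \<xi>) has_integral (t * (2 * c * norm \<xi>))) {0..t}"
      using has_integral_const_real[of "2 * c * norm \<xi>" 0 t] t0 by simp
    have "ln (\<phi> t) - ln (\<phi> 0) \<le> t * (2 * c * norm \<xi>) + I"
    proof (rule has_integral_le[OF ftc has_integral_add[OF ci gi]])
      fix s assume s: "s \<in> {0..t}"
      show "D s / \<phi> s \<le> 2 * c * norm \<xi> + g s"
        using upper[of s] pos[of s] s by (simp add: divide_le_eq)
    qed
    define Xp where "Xp = t * (2 * c * norm \<xi>) + I"
    have "\<phi> t \<le> \<phi> 0 * exp Xp"
    proof -
      have "\<phi> t = exp (ln (\<phi> t))" using pos[OF t0] by simp
      also have "\<dots> \<le> exp (ln (\<phi> 0) + Xp)" using \<open>ln (\<phi> t) - ln (\<phi> 0) \<le> _\<close> by (simp add: Xp_def)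
      also have "\<dots> = \<phi> 0 * exp Xp" using phi0 by (simp add: exp_add)
      finally show ?thesis .
    qed
    hence "(norm (E t))^2 \<le> (norm (mat 1 :: complex^'m^'m) * exp (Xp/2))^2"
      using E0 by (simp add: \<phi>_def power2_norm_eq_inner power_mult_distrib exp_double[symmetric] power2_eq_square[of "exp _"] exp_add[symmetric])
    hence nE: "norm (E t) \<le> norm (mat 1 :: complex^'m^'m) * exp (Xp/2)"
      by (rule power2_le_imp_le) simp
    have xiL: "norm \<xi> * t \<le> N * L"
    proof (cases "norm \<xi> \<ge> N")
      case True
      hence "T = 0" by (simp add: T_def t_xi_def)
      thus ?thesis using t0 tT L0 N_pos by simp
    next
      case False
      show ?thesis
      proof (cases "norm \<xi> = 0")
        case True thus ?thesis using L0 N_pos by simp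
      next
        case False2: False
        have "(1 + T) * norm \<xi> = N * L"
          using t_xi_prop[OF N_pos nu, of "norm \<xi>"] False False2 by (simp add: T_def L_def)
        moreover have "norm \<xi> * t \<le> (1 + T) * norm \<xi>"
        proof -
          have "t * norm \<xi> \<le> T * norm \<xi>" using tT by (rule mult_right_mono) simp
          thus ?thesis using norm_ge_zero[of \<xi>] unfolding distrib_right mult_1 mult.commute[of "norm \<xi>" t] by linarith
        qed
        ultimately show ?thesis by simp
      qed
    qed
    have cpart: "c * norm \<xi> * t \<le> \<bar>c\<bar> * N * L"
    proof -
      have "c * norm \<xi> * t \<le> \<bar>c\<bar> * (norm \<xi> * t)" using t0 by (simp add: mult.assoc abs_mult_pos mult_right_mono)
      also have "\<dots> \<le> \<bar>c\<bar> * (N * L)" using xiL by (simp add: mult_left_mono)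
      finally show ?thesis by (simp add: mult.assoc)
    qed
    have Ipart: "I \<le> \<bar>Cg\<bar> * L"
    proof -
      have "I \<le> Cg * ln (exp 1 + t) powr \<nu>" using gI t0 unfolding I_def by blast
      also have "\<dots> \<le> \<bar>Cg\<bar> * ln (exp 1 + t) powr \<nu>" by (simp add: mult_right_mono)
      also have "\<dots> \<le> \<bar>Cg\<bar> * L" unfolding L_def
        using lnpos[OF t0] tT t0 nu by (intro mult_left_mono powr_mono2 ln_mono) (auto intro: add_pos_nonneg)
      finally show ?thesis .
    qed
    have "Xp / 2 \<le> (\<bar>c\<bar> * N + \<bar>Cg\<bar> / 2) * L"
      using cpart Ipart by (simp add: Xp_def algebra_simps)
    hence "exp (Xp/2) \<le> exp ((\<bar>c\<bar> * N + \<bar>Cg\<bar> / 2) * L)" by simp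
    with nE show "norm (E t) \<le> norm (mat 1 :: complex^'m^'m) * exp ((\<bar>c\<bar> * N + \<bar>Cg\<bar> / 2) * ln (exp 1 + t_xi N \<nu> (norm \<xi>)) powr \<nu>)"
      unfolding L_def T_def by (meson mult_left_mono norm_ge_zero order_trans)
  qed
qed

end
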